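(* Let $m\ge 2$, $n\ge1$, $\varepsilon\in[0,1/2)$, $\delta\ge 0$. Suppose the $m$ datasets $\{x_{1i}\}_{i=1}^n,\dots,\{x_{mi}\}_{i=1}^n$ are statistically independent and there exists $\boldsymbol\theta^\star\in\mathbb{R}^m$ and $S\subseteq[m]$ with $|S^c|/m\le\varepsilon$ and $\min_{\theta\in\mathbb{R}}\max_{j\in S}|\theta^\star_j-\theta|\le\delta$, such that for each $j\in[m]$, $\{x_{ji}\}_{i=1}^n$ are i.i.d. $N(\theta^\star_j,1)$. Let $f_j(\theta)=\frac1{2n}\sum_{i=1}^n(x_{ji}-\theta)^2$ and let $(\widehat\theta_1,\dots,\widehat\theta_m,\widehat\theta)$ be any minimizer of $\sum_{j=1}^m[f_j(\theta_j)+\lambda|\theta_j-\theta|]$ over $\theta_1,\dots,\theta_m,\theta\in\mathbb{R}$. Choose any $t\ge1$, $c\in[\varepsilon,1/2)$ and $$\lambda=\frac{5}{1-2c}\sqrt{\frac{2(\log m+t)}{n}}.$$ Then there exists a universal constant $C>0$ such that with probability at least $1-e^{-t}$, $$\max_{j\in S}|\widehat\theta_j-\theta^\star_j|<\frac{C}{(1-2c)^2}\Big(\sqrt{\frac{t}{mn}}+\min\Big\{\delta,\sqrt{\frac{\log m+t}{n}}\Big\}+\varepsilon\sqrt{\frac{\log m+t}{n}}\Big),$$ $$\max_{j\in S^c}|\widehat\theta_j-\theta^\star_j|<\frac{C}{(1-2c)^2}\sqrt{\frac{\log m+t}{n}}.$$ *)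

theory Defs
  imports "HOL-Probability.Probability"
begin

text \<open>Data: x :: nat \<times> nat \<Rightarrow> real, where x (j,i) is the i-th sample of dataset j,
  j \<in> {1..m}, i \<in> {1..n}.\<close>

definition data_measure :: "nat \<Rightarrow> nat \<Rightarrow> (nat \<Rightarrow> real) \<Rightarrow> (nat \<times> nat \<Rightarrow> real) measure" where
  "data_measure m n theta_star =
     PiM ({1..m} \<times> {1..n})
         (\<lambda>(j,i). density lborel (\<lambda>y. ennreal (normal_density (theta_star j) 1 y)))"

definition loss_fj :: "nat \<Rightarrow> (nat \<times> nat \<Rightarrow> real) \<Rightarrow> nat \<Rightarrow> real \<Rightarrow> real" where
  "loss_fj n x j th = (1 / (2 * real n)) * (\<Sum>i=1..n. (x (j,i) - th)\<^sup>2)"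

definition objective :: "nat \<Rightarrow> nat \<Rightarrow> real \<Rightarrow> (nat \<times> nat \<Rightarrow> real) \<Rightarrow> (nat \<Rightarrow> real) \<Rightarrow> real \<Rightarrow> real" where
  "objective m n lam x ths th = (\<Sum>j=1..m. loss_fj n x j (ths j) + lam * \<bar>ths j - th\<bar>)"

definition is_minimizer :: "nat \<Rightarrow> nat \<Rightarrow> real \<Rightarrow> (nat \<times> nat \<Rightarrow> real) \<Rightarrow> (nat \<Rightarrow> real) \<Rightarrow> real \<Rightarrow> bool" where
  "is_minimizer m n lam x ths th \<longleftrightarrow>
     (\<forall>ths' th'. objective m n lam x ths th \<le> objective m n lam x ths' th')"

end

theory Submission
  imports Defs
begin


lemma normal_shift_eq:
  "normal_density \<mu> 1 y * exp (c * (y - \<mu>)) = exp (c\<^sup>2 / 2) * normal_density (\<mu> + c) 1 y"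
proof -
  have "-(y - \<mu>)\<^sup>2 / 2 + c * (y - \<mu>) = c\<^sup>2/2 + (-(y - (\<mu> + c))\<^sup>2 / 2)"
    by (simp add: power2_eq_square field_simps)
  then have "exp (-(y - \<mu>)\<^sup>2 / 2) * exp (c * (y - \<mu>)) = exp (c\<^sup>2/2) * exp (-(y - (\<mu> + c))\<^sup>2 / 2)"
    by (simp flip: exp_add)
  then show ?thesis unfolding normal_density_def by simp
qed

lemma mgf_normal:
  "(\<integral>\<^sup>+ y. ennreal (exp (c * (y - \<mu>))) \<partial>density lborel (\<lambda>y. ennreal (normal_density \<mu> 1 y)))
     = ennreal (exp (c\<^sup>2 / 2))"
proof -
  have "(\<integral>\<^sup>+ y. ennreal (exp (c * (y - \<mu>))) \<partial>density lborel (\<lambda>y. ennreal (normal_density \<mu> 1 y)))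
      = (\<integral>\<^sup>+ y. ennreal (normal_density \<mu> 1 y) * ennreal (exp (c * (y - \<mu>))) \<partial>lborel)"
    by (subst nn_integral_density) auto
  also have "\<dots> = (\<integral>\<^sup>+ y. ennreal (exp (c\<^sup>2 / 2)) * ennreal (normal_density (\<mu> + c) 1 y) \<partial>lborel)"
    by (intro nn_integral_cong) (simp add: normal_shift_eq flip: ennreal_mult)
  also have "\<dots> = ennreal (exp (c\<^sup>2 / 2)) * (\<integral>\<^sup>+ y. ennreal (normal_density (\<mu> + c) 1 y) \<partial>lborel)"
    by (subst nn_integral_cmult) auto
  also have "(\<integral>\<^sup>+ y. ennreal (normal_density (\<mu> + c) 1 y) \<partial>lborel) = 1"
    by (subst nn_integral_eq_integral) auto
  finally show ?thesis by simp
qed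

lemma tail_bound:
  fixes \<mu> :: "'i \<Rightarrow> real"
  assumes fin: "finite I" and JI: "J \<subseteq> I" and Jne: "J \<noteq> {}" and a: "a > 0"
    and sg: "\<sigma> = 1 \<or> \<sigma> = -1"
  defines "N \<equiv> PiM I (\<lambda>k. density lborel (\<lambda>y. ennreal (normal_density (\<mu> k) 1 y)))"
  shows "measure N {x \<in> space N. a \<le> \<sigma> * (\<Sum>k\<in>J. x k - \<mu> k)} \<le> exp (- a\<^sup>2 / (2 * real (card J)))"
proof -
  let ?M = "\<lambda>k. density lborel (\<lambda>y. ennreal (normal_density (\<mu> k) 1 y))"
  have ps: "prob_space (?M k)" for k by (rule prob_space_normal_density) simp
  interpret product_sigma_finite ?M
    unfolding product_sigma_finite_def
    using ps prob_space_imp_sigma_finite by blast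
  interpret P: prob_space N unfolding N_def by (rule prob_space_PiM) (rule ps)
  have finJ: "finite J" using fin JI finite_subset by blast
  have cJ: "card J > 0" using finJ Jne by (simp add: card_gt_0_iff)
  define s where "s = a / real (card J)"
  have s: "s > 0" using a cJ by (simp add: s_def)
  define f where "f = (\<lambda>x. \<sigma> * (\<Sum>k\<in>J. x k - \<mu> k))"
  have fm[measurable]: "f \<in> borel_measurable N"
    unfolding f_def N_def
  proof (intro borel_measurable_times borel_measurable_const borel_measurable_sum borel_measurable_diff)
    fix k assume "k \<in> J"
    then have "k \<in> I" using JI by blast
    then show "(\<lambda>x. x k) \<in> borel_measurable (PiM I ?M)"
      using measurable_component_singleton[of k I ?M] by simp
  qed
  have "emeasure N {x \<in> space N. f x \<ge> a} \<le>
        ennreal (exp (-s * a)) * (\<integral>\<^sup>+ x. ennreal (exp (s * f x)) * indicator (space N) x \<partial>N)"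
    by (rule Chernoff_ineq_nn_integral_ge) (use s in auto)
  also have "(\<integral>\<^sup>+ x. ennreal (exp (s * f x)) * indicator (space N) x \<partial>N)
      = (\<integral>\<^sup>+ x. (\<Prod>k\<in>I. ennreal (exp ((if k \<in> J then s * \<sigma> else 0) * (x k - \<mu> k)))) \<partial>N)"
  proof (intro nn_integral_cong)
    fix x assume "x \<in> space N"
    have "s * f x = (\<Sum>k\<in>I. (if k \<in> J then s * \<sigma> else 0) * (x k - \<mu> k))"
    proof -
      have "(\<Sum>k\<in>I. (if k \<in> J then s * \<sigma> else 0) * (x k - \<mu> k)) = (\<Sum>k\<in>J. s * \<sigma> * (x k - \<mu> k))"
      proof -
        have "(\<Sum>k\<in>I. (if k \<in> J then s * \<sigma> else 0) * (x k - \<mu> k)) = (\<Sum>k\<in>I. (if k \<in> J then s * \<sigma> * (x k - \<mu> k) else 0))"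
          by (intro sum.cong) auto
        also have "\<dots> = (\<Sum>k\<in>I \<inter> J. s * \<sigma> * (x k - \<mu> k))"
          using fin by (simp add: sum.inter_restrict)
        finally show ?thesis using JI by (simp add: Int_absorb1)
      qed
      then show ?thesis by (simp add: f_def sum_distrib_left mult.assoc)
    qed
    then show "ennreal (exp (s * f x)) * indicator (space N) x
      = (\<Prod>k\<in>I. ennreal (exp ((if k \<in> J then s * \<sigma> else 0) * (x k - \<mu> k))))"
      using \<open>x \<in> space N\<close> fin by (simp add: exp_sum prod_ennreal)
  qed
  also have "\<dots> = (\<Prod>k\<in>I. ennreal (exp ((if k \<in> J then s * \<sigma> else 0)\<^sup>2 / 2)))"
    unfolding N_def
    by (subst product_nn_integral_prod) (auto simp: fin mgf_normal)
  also have "\<dots> = ennreal (exp (s\<^sup>2 * real (card J) / 2))"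
  proof -
    have "(\<Sum>k\<in>I. (if k \<in> J then s * \<sigma> else 0)\<^sup>2 / 2) = (\<Sum>k\<in>J. s\<^sup>2 / 2)"
    proof -
      have "(\<Sum>k\<in>I. (if k \<in> J then s * \<sigma> else 0)\<^sup>2 / 2) = (\<Sum>k\<in>I. (if k \<in> J then s\<^sup>2 / 2 else 0))"
        using sg by (intro sum.cong) (auto simp: power_mult_distrib)
      also have "\<dots> = (\<Sum>k\<in>I \<inter> J. s\<^sup>2 / 2)"
        by (simp only: sum.If_cases[OF fin]) simp
      finally show ?thesis using JI by (simp add: Int_absorb1)
    qed
    then show ?thesis using fin
      by (simp add: prod_ennreal exp_sum[symmetric])
  qed
  finally have "emeasure N {x \<in> space N. f x \<ge> a} \<le> ennreal (exp (-s * a) * exp (s\<^sup>2 * real (card J) / 2))"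
    by (simp add: ennreal_mult)
  also have "exp (-s * a) * exp (s\<^sup>2 * real (card J) / 2) = exp (- a\<^sup>2 / (2 * real (card J)))"
    using cJ by (simp add: s_def flip: exp_add) (simp add: field_simps power2_eq_square)
  finally have "emeasure N {x \<in> space N. f x \<ge> a} \<le> ennreal (exp (- a\<^sup>2 / (2 * real (card J))))" .
  then show ?thesis unfolding f_def
    by (simp add: P.emeasure_eq_measure)
qed

lemma meas_lin:
  fixes \<mu> :: "'i \<Rightarrow> real"
  assumes JI: "J \<subseteq> I"
  shows "(\<lambda>x. \<sigma> * (\<Sum>k\<in>J. x k - \<mu> k)) \<in> borel_measurable (PiM I (\<lambda>k. density lborel (\<lambda>y. ennreal (normal_density (\<nu> k) 1 y))))"
proof (intro borel_measurable_times borel_measurable_const borel_measurable_sum borel_measurable_diff)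
  fix k assume "k \<in> J"
  then have "k \<in> I" using JI by blast
  then show "(\<lambda>x. x k) \<in> borel_measurable (PiM I (\<lambda>k. density lborel (\<lambda>y. ennreal (normal_density (\<nu> k) 1 y))))"
    using measurable_component_singleton[of k I "\<lambda>k. density lborel (\<lambda>y. ennreal (normal_density (\<nu> k) 1 y))"] by simp
qed

lemma data_measure_eq:
  "data_measure m n tst = PiM ({1..m} \<times> {1..n})
     (\<lambda>k. density lborel (\<lambda>y. ennreal (normal_density ((\<lambda>k. tst (fst k)) k) 1 y)))"
  unfolding data_measure_def by (intro PiM_cong refl) (auto simp: case_prod_beta)

lemma sum_block:
  "(\<Sum>k\<in>A \<times> B. f k) = (\<Sum>j\<in>A. \<Sum>i\<in>B. f (j, i))"
  by (simp add: sum.cartesian_product)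

lemma sum_row:
  "(\<Sum>k\<in>{j} \<times> B. f k) = (\<Sum>i\<in>B. f (j, i))"
  by (simp add: sum_block)

lemma good_event:
  assumes m: "m \<ge> 1" and n: "n \<ge> 1" and S: "S \<subseteq> {1..m}" "S \<noteq> {}" and b1: "b1 > 0" and b2: "b2 > 0"
  shows "\<exists>A \<in> sets (data_measure m n tst).
     measure (data_measure m n tst) A \<ge> 1 - (2 * real m * exp (- b1\<^sup>2 / (2 * real n))
        + 2 * exp (- b2\<^sup>2 / (2 * (real (card S) * real n)))) \<and>
     (\<forall>x\<in>A. (\<forall>j\<in>{1..m}. \<bar>\<Sum>i=1..n. x (j,i) - tst j\<bar> < b1) \<and>
              \<bar>\<Sum>j\<in>S. \<Sum>i=1..n. x (j,i) - tst j\<bar> < b2)"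
proof -
  define I where "I = {1..m} \<times> {1..n}"
  define \<mu> where "\<mu> = (\<lambda>k::nat\<times>nat. tst (fst k))"
  define N where "N = PiM I (\<lambda>k. density lborel (\<lambda>y. ennreal (normal_density (\<mu> k) 1 y)))"
  have MN: "data_measure m n tst = N" unfolding N_def I_def \<mu>_def by (rule data_measure_eq)
  have ps: "prob_space (density lborel (\<lambda>y. ennreal (normal_density (\<mu> k) 1 y)))" for k
    by (rule prob_space_normal_density) simp
  interpret P: prob_space N unfolding N_def by (rule prob_space_PiM) (rule ps)
  have finI: "finite I" unfolding I_def by simp
  define B where "B = (\<lambda>J b (\<sigma>::real). {x \<in> space N. b \<le> \<sigma> * (\<Sum>k\<in>J. x k - \<mu> k)})"
  have Bsets: "B J b \<sigma> \<in> sets N" if "J \<subseteq> I" for J b \<sigma>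
  proof -
    have [measurable]: "(\<lambda>x. \<sigma> * (\<Sum>k\<in>J. x k - \<mu> k)) \<in> borel_measurable N"
      unfolding N_def by (rule meas_lin[OF that])
    show ?thesis unfolding B_def by measurable
  qed
  have Bprob: "measure N (B J b \<sigma>) \<le> exp (- b\<^sup>2 / (2 * real (card J)))"
    if "J \<subseteq> I" "J \<noteq> {}" "b > 0" "\<sigma> = 1 \<or> \<sigma> = -1" for J b \<sigma>
    unfolding B_def N_def by (rule tail_bound[OF finI that])
  define R where "R = (\<lambda>j. B ({j} \<times> {1..n}) b1 1 \<union> B ({j} \<times> {1..n}) b1 (-1))"
  define U where "U = (\<Union>j\<in>{1..m}. R j) \<union> B (S \<times> {1..n}) b2 1 \<union> B (S \<times> {1..n}) b2 (-1)"
  have rowI: "{j} \<times> {1..n} \<subseteq> I" if "j \<in> {1..m}" for j using that unfolding I_def by auto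
  have rowne: "{j} \<times> {1..n} \<noteq> {}" for j using n by auto
  have cardrow: "card ({j} \<times> {1..n}) = n" for j by (simp add: card_cartesian_product)
  have SI: "S \<times> {1..n} \<subseteq> I" using S unfolding I_def by auto
  have Sne: "S \<times> {1..n} \<noteq> {}" using S n by auto
  have cardS: "card (S \<times> {1..n}) = card S * n" by (simp add: card_cartesian_product)
  have Rsets: "R j \<in> sets N" if "j \<in> {1..m}" for j unfolding R_def using Bsets[OF rowI[OF that]] by auto
  have Rprob: "measure N (R j) \<le> 2 * exp (- b1\<^sup>2 / (2 * real n))" if "j \<in> {1..m}" for j
  proof -
    have "measure N (R j) \<le> measure N (B ({j} \<times> {1..n}) b1 1) + measure N (B ({j} \<times> {1..n}) b1 (-1))"
      unfolding R_def by (rule measure_Un_le) (use Bsets[OF rowI[OF that]] in auto)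
    also have "\<dots> \<le> exp (- b1\<^sup>2 / (2 * real n)) + exp (- b1\<^sup>2 / (2 * real n))"
      using Bprob[OF rowI[OF that] rowne b1] cardrow by (intro add_mono) auto
    finally show ?thesis by simp
  qed
  have Usets: "U \<in> sets N" unfolding U_def using Rsets Bsets[OF SI] by auto
  have "measure N U \<le> measure N ((\<Union>j\<in>{1..m}. R j) \<union> B (S \<times> {1..n}) b2 1) + measure N (B (S \<times> {1..n}) b2 (-1))"
    unfolding U_def by (rule measure_Un_le) (use Rsets Bsets[OF SI] in auto)
  also have "measure N ((\<Union>j\<in>{1..m}. R j) \<union> B (S \<times> {1..n}) b2 1) \<le> measure N (\<Union>j\<in>{1..m}. R j) + measure N (B (S \<times> {1..n}) b2 1)"
    by (rule measure_Un_le) (use Rsets Bsets[OF SI] in auto)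
  also have "measure N (\<Union>j\<in>{1..m}. R j) \<le> (\<Sum>j\<in>{1..m}. measure N (R j))"
    by (rule P.finite_measure_subadditive_finite) (use Rsets in auto)
  also have "\<dots> \<le> (\<Sum>j\<in>{1..m}. 2 * exp (- b1\<^sup>2 / (2 * real n)))"
    by (rule sum_mono) (rule Rprob)
  also have "measure N (B (S \<times> {1..n}) b2 1) \<le> exp (- b2\<^sup>2 / (2 * (real (card S) * real n)))"
    using Bprob[OF SI Sne b2] cardS by simp
  also have "measure N (B (S \<times> {1..n}) b2 (-1)) \<le> exp (- b2\<^sup>2 / (2 * (real (card S) * real n)))"
    using Bprob[OF SI Sne b2] cardS by simp
  finally have Ub: "measure N U \<le> 2 * real m * exp (- b1\<^sup>2 / (2 * real n)) + 2 * exp (- b2\<^sup>2 / (2 * (real (card S) * real n)))"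
    by simp
  define A where "A = space N - U"
  have Asets: "A \<in> sets N" unfolding A_def using Usets by auto
  have "measure N A = 1 - measure N U" unfolding A_def by (rule P.prob_compl[OF Usets])
  then have Ameas: "measure N A \<ge> 1 - (2 * real m * exp (- b1\<^sup>2 / (2 * real n)) + 2 * exp (- b2\<^sup>2 / (2 * (real (card S) * real n))))"
    using Ub by linarith
  have Agood: "(\<forall>j\<in>{1..m}. \<bar>\<Sum>i=1..n. x (j,i) - tst j\<bar> < b1) \<and> \<bar>\<Sum>j\<in>S. \<Sum>i=1..n. x (j,i) - tst j\<bar> < b2"
    if x: "x \<in> A" for x
  proof -
    have xs: "x \<in> space N" and xU: "x \<notin> U" using x unfolding A_def by auto
    have "\<bar>\<Sum>i=1..n. x (j,i) - tst j\<bar> < b1" if j: "j \<in> {1..m}" for j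
    proof -
      have "x \<notin> R j" using xU j unfolding U_def by auto
      then have "\<not> b1 \<le> (\<Sum>k\<in>{j} \<times> {1..n}. x k - \<mu> k)" "\<not> b1 \<le> - (\<Sum>k\<in>{j} \<times> {1..n}. x k - \<mu> k)"
        using xs unfolding R_def B_def by auto
      moreover have "(\<Sum>k\<in>{j} \<times> {1..n}. x k - \<mu> k) = (\<Sum>i=1..n. x (j,i) - tst j)"
        unfolding \<mu>_def by (simp add: sum_row)
      ultimately show ?thesis by linarith
    qed
    moreover
    have "x \<notin> B (S \<times> {1..n}) b2 1" "x \<notin> B (S \<times> {1..n}) b2 (-1)" using xU unfolding U_def by auto
    then have "\<not> b2 \<le> (\<Sum>k\<in>S \<times> {1..n}. x k - \<mu> k)" "\<not> b2 \<le> - (\<Sum>k\<in>S \<times> {1..n}. x k - \<mu> k)"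
      using xs unfolding B_def by auto
    moreover have "(\<Sum>k\<in>S \<times> {1..n}. x k - \<mu> k) = (\<Sum>j\<in>S. \<Sum>i=1..n. x (j,i) - tst j)"
      unfolding \<mu>_def by (simp add: sum_block)
    ultimately show ?thesis by auto
  qed
  show ?thesis using Asets Ameas Agood unfolding MN by blast
qed



lemma sum_sq_shift:
  "finite A \<Longrightarrow> (\<Sum>i\<in>A. (f i - a)\<^sup>2) = (\<Sum>i\<in>A. (f i)\<^sup>2) - 2 * a * (\<Sum>i\<in>A. f i) + real (card A) * a\<^sup>2"
  by (induction A rule: finite_induct) (simp_all add: power2_diff algebra_simps)

lemma loss_diff:
  assumes "n \<ge> 1"
  shows "loss_fj n x j a - loss_fj n x j b
     = ((a - (\<Sum>i=1..n. x (j,i)) / real n)\<^sup>2 - (b - (\<Sum>i=1..n. x (j,i)) / real n)\<^sup>2) / 2"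
proof -
  define T where "T = (\<Sum>i=1..n. x (j,i))"
  have n: "real n > 0" using assms by simp
  have "loss_fj n x j a - loss_fj n x j b = (1 / (2 * real n)) * ((\<Sum>i=1..n. (x (j,i) - a)\<^sup>2) - (\<Sum>i=1..n. (x (j,i) - b)\<^sup>2))"
    unfolding loss_fj_def by (simp add: algebra_simps)
  also have "(\<Sum>i=1..n. (x (j,i) - a)\<^sup>2) - (\<Sum>i=1..n. (x (j,i) - b)\<^sup>2) = - 2 * a * T + real n * a\<^sup>2 + 2 * b * T - real n * b\<^sup>2"
    by (simp add: sum_sq_shift T_def)
  finally have "loss_fj n x j a - loss_fj n x j b = (1 / (2 * real n)) * (- 2 * a * T + real n * a\<^sup>2 + 2 * b * T - real n * b\<^sup>2)" .
  also have "\<dots> = (a\<^sup>2 - b\<^sup>2) / 2 - (a - b) * (T / real n)"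
    using n by (simp add: divide_simps) (simp add: algebra_simps power2_eq_square)
  also have "\<dots> = ((a - T / real n)\<^sup>2 - (b - T / real n)\<^sup>2) / 2"
    using n by (simp add: power2_eq_square divide_simps) (simp add: algebra_simps)
  finally show ?thesis unfolding T_def .
qed

definition clip :: "real \<Rightarrow> real \<Rightarrow> real" where
  "clip lam z = max (- lam) (min lam z)"

lemma prox_strong:
  fixes y th :: real
  assumes "lam \<ge> 0"
  defines "c \<equiv> y - clip lam (y - th)"
  shows "(c - y)\<^sup>2 / 2 + lam * \<bar>c - th\<bar> + (b - c)\<^sup>2 / 2 \<le> (b - y)\<^sup>2 / 2 + lam * \<bar>b - th\<bar>"
proof (cases "\<bar>y - th\<bar> \<le> lam")
  case True
  then have c: "c = th" unfolding c_def clip_def by auto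
  have "\<bar>(b - th) * (th - y)\<bar> \<le> lam * \<bar>b - th\<bar>"
  proof -
    have "\<bar>th - y\<bar> \<le> lam" using True by (simp add: abs_minus_commute)
    then have "\<bar>b - th\<bar> * \<bar>th - y\<bar> \<le> \<bar>b - th\<bar> * lam" by (simp add: mult_left_mono)
    then show ?thesis by (simp add: abs_mult mult.commute)
  qed
  moreover have "(b - y)\<^sup>2 = (b - th)\<^sup>2 + 2 * ((b - th) * (th - y)) + (th - y)\<^sup>2"
    by (simp add: power2_eq_square algebra_simps)
  moreover have "- ((b - th) * (th - y)) \<le> \<bar>(b - th) * (th - y)\<bar>" by simp
  ultimately have "(th - y)\<^sup>2 / 2 + (b - th)\<^sup>2 / 2 \<le> (b - y)\<^sup>2 / 2 + lam * \<bar>b - th\<bar>"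
  proof -
    assume a1: "\<bar>(b - th) * (th - y)\<bar> \<le> lam * \<bar>b - th\<bar>"
      and a2: "(b - y)\<^sup>2 = (b - th)\<^sup>2 + 2 * ((b - th) * (th - y)) + (th - y)\<^sup>2"
      and a3: "- ((b - th) * (th - y)) \<le> \<bar>(b - th) * (th - y)\<bar>"
    define P where "P = (b - th) * (th - y)"
    define Q where "Q = lam * \<bar>b - th\<bar>"
    define R1 where "R1 = (b - th)\<^sup>2"
    define R2 where "R2 = (th - y)\<^sup>2"
    have "\<bar>P\<bar> \<le> Q" "(b - y)\<^sup>2 = R1 + 2 * P + R2" "- P \<le> \<bar>P\<bar>"
      using a1 a2 a3 unfolding P_def Q_def R1_def R2_def by auto
    then have "R2 / 2 + R1 / 2 \<le> (b - y)\<^sup>2 / 2 + Q" by linarith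
    then show ?thesis unfolding P_def Q_def R1_def R2_def .
  qed
  then show ?thesis unfolding c by simp
next
  case False
  show ?thesis
  proof (cases "y - th > lam")
    case True
    then have c: "c = y - lam" using assms(1) unfolding c_def clip_def by auto
    have "lam * (b - th) \<le> lam * \<bar>b - th\<bar>" using assms(1) by (simp add: mult_left_mono)
    moreover have "(c - y)\<^sup>2 / 2 + lam * \<bar>c - th\<bar> + (b - c)\<^sup>2 / 2 = (b - y)\<^sup>2 / 2 + lam * (b - th)"
      unfolding c using True assms(1) by (simp add: abs_of_pos power2_eq_square field_simps)
    ultimately show ?thesis by linarith
  next
    case F2: False
    then have c: "c = y + lam" and yl: "y - th < - lam" using False assms(1) unfolding c_def clip_def by auto
    have "lam * (- (b - th)) \<le> lam * \<bar>b - th\<bar>" using assms(1) by (intro mult_left_mono) auto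
    then have "- lam * (b - th) \<le> lam * \<bar>b - th\<bar>" by (simp add: algebra_simps)
    moreover have "(c - y)\<^sup>2 / 2 + lam * \<bar>c - th\<bar> + (b - c)\<^sup>2 / 2 = (b - y)\<^sup>2 / 2 + - lam * (b - th)"
      unfolding c using yl assms(1) by (simp add: abs_of_neg power2_eq_square field_simps)
    ultimately show ?thesis by linarith
  qed
qed

lemma prox_unique:
  assumes "lam \<ge> 0"
    and min: "\<And>b. (a - y)\<^sup>2 / 2 + lam * \<bar>a - th\<bar> \<le> (b - y)\<^sup>2 / 2 + lam * \<bar>b - th\<bar>"
  shows "a = y - clip lam (y - th)"
proof -
  define c where "c = y - clip lam (y - th)"
  have "(c - y)\<^sup>2 / 2 + lam * \<bar>c - th\<bar> + (a - c)\<^sup>2 / 2 \<le> (a - y)\<^sup>2 / 2 + lam * \<bar>a - th\<bar>"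
    unfolding c_def by (rule prox_strong[OF assms(1)])
  moreover have "(a - y)\<^sup>2 / 2 + lam * \<bar>a - th\<bar> \<le> (c - y)\<^sup>2 / 2 + lam * \<bar>c - th\<bar>" by (rule min)
  ultimately have "(a - c)\<^sup>2 \<le> 0" by linarith
  then have "a = c" by simp
  then show ?thesis unfolding c_def by simp
qed

lemma pos_of_quadratic:
  fixes B k :: real
  assumes k: "k \<ge> 0" and h: "\<And>h. h > 0 \<Longrightarrow> 0 \<le> h * B + h\<^sup>2 * k"
  shows "B \<ge> 0"
proof (rule ccontr)
  assume B: "\<not> B \<ge> 0"
  show False
  proof (cases "k = 0")
    case True then show False using h[of 1] B by simp
  next
    case False
    then have kp: "k > 0" using k by simp
    define h0 where "h0 = - B / (2 * k)"
    have h0: "h0 > 0" using B kp by (simp add: h0_def field_simps)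
    have "h0 * B + h0\<^sup>2 * k = h0 * (B / 2)"
      using kp by (simp add: h0_def power2_eq_square field_simps)
    also have "\<dots> < 0" using h0 B by (simp add: mult_pos_neg)
    finally show False using h[OF h0] by simp
  qed
qed

definition ybar :: "nat \<Rightarrow> (nat \<times> nat \<Rightarrow> real) \<Rightarrow> nat \<Rightarrow> real" where
  "ybar n x j = (\<Sum>i=1..n. x (j,i)) / real n"

lemma objective_diff:
  "objective m n lam x ths' th' - objective m n lam x ths th =
   (\<Sum>k=1..m. (loss_fj n x k (ths' k) - loss_fj n x k (ths k)) + lam * (\<bar>ths' k - th'\<bar> - \<bar>ths k - th\<bar>))"
  unfolding objective_def by (simp add: sum_subtractf[symmetric] algebra_simps)

lemma minimizer_prox:
  assumes mn: "is_minimizer m n lam x ths th" and n: "n \<ge> 1" and lam: "lam \<ge> 0" and j: "j \<in> {1..m}"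
  shows "ths j = ybar n x j - clip lam (ybar n x j - th)"
proof (rule prox_unique[OF lam])
  fix b
  let ?y = "ybar n x j"
  have "0 \<le> objective m n lam x (ths(j := b)) th - objective m n lam x ths th"
    using mn unfolding is_minimizer_def by (simp add: algebra_simps)
  also have "\<dots> = (\<Sum>k=1..m. (loss_fj n x k ((ths(j := b)) k) - loss_fj n x k (ths k)) + lam * (\<bar>(ths(j := b)) k - th\<bar> - \<bar>ths k - th\<bar>))"
    by (rule objective_diff)
  also have "\<dots> = (loss_fj n x j b - loss_fj n x j (ths j)) + lam * (\<bar>b - th\<bar> - \<bar>ths j - th\<bar>)"
    using j by (subst sum.remove[of _ j]) auto
  also have "loss_fj n x j b - loss_fj n x j (ths j) = ((b - ?y)\<^sup>2 - (ths j - ?y)\<^sup>2) / 2"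
    using loss_diff[OF n] unfolding ybar_def by blast
  finally show "(ths j - ?y)\<^sup>2 / 2 + lam * \<bar>ths j - th\<bar> \<le> (b - ?y)\<^sup>2 / 2 + lam * \<bar>b - th\<bar>"
    by (simp add: algebra_simps diff_divide_distrib)
qed

lemma minimizer_shift:
  assumes mn: "is_minimizer m n lam x ths th" and n: "n \<ge> 1" and lam: "lam \<ge> 0" and S: "S \<subseteq> {1..m}"
  shows "\<bar>\<Sum>j\<in>S. ths j - ybar n x j\<bar> \<le> lam * real (card ({1..m} - S))"
proof -
  define A where "A = (\<Sum>j\<in>S. ths j - ybar n x j)"
  define p where "p = real (card S)"
  define q where "q = real (card ({1..m} - S))"
  have finS: "finite S" using S finite_subset by blast
  have key: "0 \<le> h * A + h\<^sup>2 * (p / 2) + lam * \<bar>h\<bar> * q" for h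
  proof -
    define ths' where "ths' = (\<lambda>k. if k \<in> S then ths k + h else ths k)"
    define D where "D = (\<lambda>k. (loss_fj n x k (ths' k) - loss_fj n x k (ths k)) + lam * (\<bar>ths' k - (th + h)\<bar> - \<bar>ths k - th\<bar>))"
    have "0 \<le> objective m n lam x ths' (th + h) - objective m n lam x ths th"
      using mn unfolding is_minimizer_def by (simp add: algebra_simps)
    also have "\<dots> = (\<Sum>k=1..m. D k)" unfolding D_def by (rule objective_diff)
    also have "\<dots> = (\<Sum>k\<in>S. D k) + (\<Sum>k\<in>{1..m} - S. D k)"
      using S by (subst sum.subset_diff[of S]) auto
    also have "(\<Sum>k\<in>S. D k) = (\<Sum>k\<in>S. h * (ths k - ybar n x k) + h\<^sup>2 / 2)"
    proof (intro sum.cong refl)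
      fix k assume k: "k \<in> S"
      have "loss_fj n x k (ths k + h) - loss_fj n x k (ths k) = ((ths k + h - ybar n x k)\<^sup>2 - (ths k - ybar n x k)\<^sup>2) / 2"
        using loss_diff[OF n] unfolding ybar_def by blast
      then show "D k = h * (ths k - ybar n x k) + h\<^sup>2 / 2"
        using k unfolding D_def ths'_def by (simp add: power2_eq_square field_simps)
    qed
    also have "\<dots> = h * A + h\<^sup>2 * (p / 2)"
      unfolding A_def p_def by (simp add: sum.distrib sum_distrib_left[symmetric])
    also have "(\<Sum>k\<in>{1..m} - S. D k) \<le> (\<Sum>k\<in>{1..m} - S. lam * \<bar>h\<bar>)"
    proof (intro sum_mono)
      fix k assume k: "k \<in> {1..m} - S"
      have "\<bar>ths k - (th + h)\<bar> - \<bar>ths k - th\<bar> \<le> \<bar>h\<bar>" by linarith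
      then have "lam * (\<bar>ths k - (th + h)\<bar> - \<bar>ths k - th\<bar>) \<le> lam * \<bar>h\<bar>" using lam by (rule mult_left_mono)
      then show "D k \<le> lam * \<bar>h\<bar>" using k unfolding D_def ths'_def by simp
    qed
    also have "\<dots> = lam * \<bar>h\<bar> * q" unfolding q_def by simp
    finally show ?thesis by simp
  qed
  have p0: "p / 2 \<ge> 0" unfolding p_def by simp
  have "A + lam * q \<ge> 0"
  proof (rule pos_of_quadratic[OF p0])
    fix h :: real assume "h > 0"
    then show "0 \<le> h * (A + lam * q) + h\<^sup>2 * (p / 2)" using key[of h] by (simp add: algebra_simps)
  qed
  moreover have "lam * q - A \<ge> 0"
  proof (rule pos_of_quadratic[OF p0])
    fix h :: real assume "h > 0"
    then show "0 \<le> h * (lam * q - A) + h\<^sup>2 * (p / 2)" using key[of "-h"] by (simp add: algebra_simps)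
  qed
  ultimately show ?thesis unfolding A_def q_def by linarith
qed

lemma det_bound:
  fixes y ths tst :: "nat \<Rightarrow> real"
  assumes finS: "finite S"
    and pq: "q < p" and q0: "q \<ge> 0" and pdef: "p = real (card S)"
    and lam: "lam > 0"
    and H1: "\<forall>j\<in>S. ths j = y j - clip lam (y j - th)"
    and H2: "\<bar>\<Sum>j\<in>S. ths j - y j\<bar> \<le> lam * q"
    and H3: "\<forall>j\<in>S. \<bar>y j - tst j\<bar> \<le> s"
    and H4: "\<bar>\<Sum>j\<in>S. y j - tst j\<bar> \<le> p * u"
    and H5: "\<forall>j\<in>S. \<bar>tst j - th0\<bar> \<le> \<delta>"
    and H6: "2 * \<delta> + 2 * s + lam * q / p \<le> lam"
  shows "\<forall>j\<in>S. \<bar>ths j - tst j\<bar> \<le> lam * q / p + u + 2 * \<delta>"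
proof -
  have p0: "p > 0" using pq q0 by linarith
  have Sne: "S \<noteq> {}" using p0 pdef by auto
  define lq where "lq = lam * q / p"
  have lq_lt: "lq < lam" unfolding lq_def using pq p0 lam by (simp add: divide_less_eq)
  have lq0: "lq \<ge> 0" unfolding lq_def using q0 p0 lam by simp
  have sum_lq: "(\<Sum>j\<in>S. lq) = lam * q" unfolding lq_def using p0 pdef by simp
  have A: "\<bar>th - th0\<bar> \<le> \<delta> + s + lq"
  proof (rule ccontr)
    assume "\<not> ?thesis"
    then consider "th - th0 > \<delta> + s + lq" | "th0 - th > \<delta> + s + lq" by linarith
    then show False
    proof cases
      case 1
      have "\<forall>j\<in>S. ths j - y j > lq"
      proof
        fix j assume j: "j \<in> S"
        have "y j \<le> th0 + \<delta> + s" using H3 H5 j by fastforce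
        then have d: "th - y j > lq" using 1 by linarith
        have "ths j - y j = - clip lam (y j - th)" using H1 j by simp
        then show "ths j - y j > lq" using d lq_lt lq0 unfolding clip_def by auto
      qed
      then have "(\<Sum>j\<in>S. lq) < (\<Sum>j\<in>S. ths j - y j)"
        using finS Sne by (intro sum_strict_mono) auto
      then show False using H2 sum_lq by linarith
    next
      case 2
      have "\<forall>j\<in>S. ths j - y j < - lq"
      proof
        fix j assume j: "j \<in> S"
        have "y j \<ge> th0 - \<delta> - s" using H3 H5 j by fastforce
        then have d: "y j - th > lq" using 2 by linarith
        have "ths j - y j = - clip lam (y j - th)" using H1 j by simp
        then show "ths j - y j < - lq" using d lq_lt lq0 unfolding clip_def by auto
      qed
      then have "(\<Sum>j\<in>S. ths j - y j) < (\<Sum>j\<in>S. - lq)"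
        using finS Sne by (intro sum_strict_mono) auto
      then show False using H2 sum_lq by (simp add: sum_negf)
    qed
  qed
  have B: "\<forall>j\<in>S. ths j = th"
  proof
    fix j assume j: "j \<in> S"
    have "\<bar>y j - th\<bar> \<le> lam" using H3 H5 j A H6 unfolding lq_def by fastforce
    then show "ths j = th" using H1 j lam unfolding clip_def by auto
  qed
  have C: "\<bar>p * th - (\<Sum>j\<in>S. y j)\<bar> \<le> lam * q"
  proof -
    have "(\<Sum>j\<in>S. ths j - y j) = (\<Sum>j\<in>S. th - y j)" using B by simp
    also have "\<dots> = p * th - (\<Sum>j\<in>S. y j)" using pdef by (simp add: sum_subtractf)
    finally show ?thesis using H2 by simp
  qed
  show ?thesis
  proof
    fix j assume j: "j \<in> S"
    have "\<bar>(\<Sum>k\<in>S. tst k - tst j)\<bar> \<le> (\<Sum>k\<in>S. 2 * \<delta>)"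
    proof -
      have "\<bar>(\<Sum>k\<in>S. tst k - tst j)\<bar> \<le> (\<Sum>k\<in>S. \<bar>tst k - tst j\<bar>)" by (rule sum_abs)
      also have "\<dots> \<le> (\<Sum>k\<in>S. 2 * \<delta>)"
      proof (intro sum_mono)
        fix k assume "k \<in> S"
        then have "\<bar>tst k - th0\<bar> \<le> \<delta>" "\<bar>tst j - th0\<bar> \<le> \<delta>" using H5 j by auto
        then show "\<bar>tst k - tst j\<bar> \<le> 2 * \<delta>" by linarith
      qed
      finally show ?thesis .
    qed
    then have T: "\<bar>(\<Sum>k\<in>S. tst k) - p * tst j\<bar> \<le> p * (2 * \<delta>)" using pdef by (simp add: sum_subtractf)
    have E: "\<bar>(\<Sum>k\<in>S. y k) - (\<Sum>k\<in>S. tst k)\<bar> \<le> p * u" using H4 by (simp add: sum_subtractf)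
    have "p * \<bar>th - tst j\<bar> = \<bar>p * th - p * tst j\<bar>" using p0 by (simp add: abs_mult right_diff_distrib[symmetric])
    also have "\<dots> \<le> lam * q + p * u + p * (2 * \<delta>)" using C T E by linarith
    finally have "p * \<bar>th - tst j\<bar> \<le> p * (lq + u + 2 * \<delta>)"
      unfolding lq_def using p0 by (simp add: algebra_simps)
    then have "\<bar>th - tst j\<bar> \<le> lq + u + 2 * \<delta>" using p0 by simp
    then show "\<bar>ths j - tst j\<bar> \<le> lam * q / p + u + 2 * \<delta>" using B j unfolding lq_def by simp
  qed
qed



lemma sq_le_sqrt: "0 \<le> a \<Longrightarrow> 0 \<le> k \<Longrightarrow> a\<^sup>2 \<le> k\<^sup>2 * X \<Longrightarrow> X \<ge> 0 \<Longrightarrow> a \<le> k * sqrt X"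
  by (rule power2_le_imp_le) (simp_all add: power_mult_distrib)

theorem theorem2p2:
  shows "\<exists>C>0. \<forall>(m::nat) (n::nat) (\<epsilon>::real) (\<delta>::real) (theta_star::nat \<Rightarrow> real)
            (S::nat set) (t::real) (c::real) (lam::real).
    2 \<le> m \<longrightarrow> 1 \<le> n \<longrightarrow> 0 \<le> \<epsilon> \<longrightarrow> \<epsilon> < 1/2 \<longrightarrow> 0 \<le> \<delta> \<longrightarrow>
    S \<subseteq> {1..m} \<longrightarrow> real (card ({1..m} - S)) / real m \<le> \<epsilon> \<longrightarrow>
    (\<exists>th0::real. \<forall>j\<in>S. \<bar>theta_star j - th0\<bar> \<le> \<delta>) \<longrightarrow>
    1 \<le> t \<longrightarrow> \<epsilon> \<le> c \<longrightarrow> c < 1/2 \<longrightarrow>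
    lam = 5 / (1 - 2*c) * sqrt (2 * (ln (real m) + t) / real n) \<longrightarrow>
    (\<exists>A \<in> sets (data_measure m n theta_star).
       measure (data_measure m n theta_star) A \<ge> 1 - exp (- t) \<and>
       (\<forall>x\<in>A. \<forall>ths th. is_minimizer m n lam x ths th \<longrightarrow>
          (\<forall>j\<in>S. \<bar>ths j - theta_star j\<bar> <
             C / (1 - 2*c)\<^sup>2 * (sqrt (t / (real m * real n))
               + min \<delta> (sqrt ((ln (real m) + t) / real n))
               + \<epsilon> * sqrt ((ln (real m) + t) / real n))) \<and>
          (\<forall>j\<in>{1..m} - S. \<bar>ths j - theta_star j\<bar> <
             C / (1 - 2*c)\<^sup>2 * sqrt ((ln (real m) + t) / real n))))"
proof (intro exI[of _ "100::real"] conjI allI impI)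
  fix m n :: nat and \<epsilon> \<delta> :: real and tst :: "nat \<Rightarrow> real" and S :: "nat set" and t c lam :: real
  assume m2: "2 \<le> m" and n1: "1 \<le> n" and e0: "0 \<le> \<epsilon>" and e12: "\<epsilon> < 1/2" and d0: "0 \<le> \<delta>"
    and S: "S \<subseteq> {1..m}" and qe: "real (card ({1..m} - S)) / real m \<le> \<epsilon>"
    and th0: "\<exists>th0::real. \<forall>j\<in>S. \<bar>tst j - th0\<bar> \<le> \<delta>"
    and t1: "1 \<le> t" and ec: "\<epsilon> \<le> c" and c12: "c < 1/2"
    and lamdef: "lam = 5 / (1 - 2*c) * sqrt (2 * (ln (real m) + t) / real n)"
  obtain th0 where th0: "\<forall>j\<in>S. \<bar>tst j - th0\<bar> \<le> \<delta>" using th0 by blast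
  define L where "L = ln (real m) + t"
  define r where "r = sqrt (L / real n)"
  define w where "w = sqrt (t / (real m * real n))"
  define v where "v = sqrt (2 * L / real n)"
  define K1 where "K1 = 1 / (1 - 2 * c)"
  define KK where "KK = K1 * K1"
  define p where "p = real (card S)"
  define q where "q = real (card ({1..m} - S))"
  have mpos: "real m > 0" and mge: "real m \<ge> 2" using m2 by auto
  have npos: "real n > 0" using n1 by auto
  define l2 where "l2 = ln (2::real)"
  define l4 where "l4 = ln (4::real)"
  have ln2: "0 < l2" "l2 < 1" unfolding l2_def using ln_2_less_1 by auto
  have lnm: "ln (real m) \<ge> l2" unfolding l2_def using mge by simp
  have Lge: "L \<ge> 1 + l2" unfolding L_def using lnm t1 by linarith
  have Lpos: "L > 0" using Lge ln2 by linarith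
  have r2: "r\<^sup>2 = L / real n" unfolding r_def using Lpos npos by simp
  have rpos: "r > 0" unfolding r_def using Lpos npos by simp
  have wpos: "w > 0" unfolding w_def using t1 mpos npos by simp
  have w2: "w\<^sup>2 = t / (real m * real n)" unfolding w_def using t1 mpos npos by simp
  have v2: "v\<^sup>2 = 2 * r\<^sup>2" unfolding v_def r2 using Lpos npos by simp
  have v0: "v \<ge> 0" unfolding v_def using Lpos npos by simp
  have rr: "r\<^sup>2 \<ge> 0" by simp
  have e14: "((7/5) * r)\<^sup>2 = (49/25) * r\<^sup>2" by (simp add: power2_eq_square)
  have e15: "((3/2) * r)\<^sup>2 = (9/4) * r\<^sup>2" by (simp add: power2_eq_square)
  have "((7/5) * r)\<^sup>2 \<le> v\<^sup>2" unfolding e14 v2 using rr by simp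
  then have v_lo: "(7/5) * r \<le> v" using v0 by (rule power2_le_imp_le)
  have "v\<^sup>2 \<le> ((3/2) * r)\<^sup>2" unfolding e15 v2 using rr by simp
  then have v_hi: "v \<le> (3/2) * r" by (rule power2_le_imp_le) (use rpos in simp)
  have c1: "1 - 2 * c > 0" using c12 by simp
  have c1le: "1 - 2 * c \<le> 1" using ec e0 by simp
  have K1pos: "K1 > 0" unfolding K1_def using c1 by simp
  have K1ge: "K1 \<ge> 1" unfolding K1_def using c1 c1le by simp
  have KKge: "K1 \<le> KK" unfolding KK_def using K1ge by simp
  have KKpos: "KK > 0" using KKge K1pos by simp
  have Cform: "100 / (1 - 2 * c)\<^sup>2 = 100 * KK" unfolding KK_def K1_def by (simp add: power2_eq_square)
  have lamv: "lam = 5 * K1 * v" unfolding lamdef K1_def v_def L_def by simp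
  have vpos: "v > 0" using v_lo rpos by linarith
  have lam0: "lam > 0" unfolding lamv using K1pos vpos by simp
  have lamc: "lam * (1 - 2 * c) = 5 * v" unfolding lamv K1_def using c1 by simp
  have finS: "finite S" using S finite_subset by blast
  have pq_m: "p + q = real m" unfolding p_def q_def
    using card_Diff_subset[OF finS S] card_mono[OF _ S] S by (simp add: of_nat_diff)
  have q_le: "q \<le> \<epsilon> * real m" using qe mpos unfolding q_def by (simp add: divide_le_eq)
  have q0: "q \<ge> 0" unfolding q_def by simp
  have em: "\<epsilon> * real m < (1/2) * real m" by (rule mult_strict_right_mono) (use e12 mpos in auto)
  have p_ge: "p \<ge> real m / 2" using pq_m q_le em by linarith
  have ppos: "p > 0" using p_ge mpos by simp
  have pq: "q < p" using pq_m q_le em by linarith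
  have Sne: "S \<noteq> {}" using ppos unfolding p_def by auto
  define \<rho> where "\<rho> = q / p"
  have rho0: "\<rho> \<ge> 0" unfolding \<rho>_def using q0 ppos by simp
  have rho_le: "\<rho> \<le> 2 * \<epsilon>"
  proof -
    have "\<epsilon> * real m \<le> \<epsilon> * (2 * p)" using p_ge e0 by (intro mult_left_mono) auto
    then have "q \<le> 2 * \<epsilon> * p" using q_le by simp
    then show ?thesis unfolding \<rho>_def using ppos by (simp add: divide_le_eq)
  qed
  define b1 where "b1 = sqrt (2 * real n * (L + l4))"
  define b2 where "b2 = sqrt (2 * (real (card S) * real n) * (t + l4))"
  have ln4: "l4 = 2 * l2" unfolding l4_def l2_def
    using ln_realpow[of 2 2] by simp
  have L4: "L + l4 > 0" using Lpos ln2 ln4 by linarith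
  have t4: "t + l4 > 0" using t1 ln2 ln4 by linarith
  have b1pos: "b1 > 0" unfolding b1_def using npos L4 by simp
  have b2pos: "b2 > 0" unfolding b2_def using npos ppos t4 p_def by simp
  have b1sq: "b1\<^sup>2 = 2 * real n * (L + l4)" unfolding b1_def using npos L4 by simp
  have b2sq: "b2\<^sup>2 = 2 * (real (card S) * real n) * (t + l4)" unfolding b2_def using npos t4 by simp
  have e1: "exp (- b1\<^sup>2 / (2 * real n)) = exp (- t) / (4 * real m)"
  proof -
    have X: "- b1\<^sup>2 / (2 * real n) = - (ln (real m) + l4 + t)" unfolding b1sq L_def using npos by simp
    have Y: "exp (ln (real m) + l4 + t) = real m * 4 * exp t" using mpos by (simp add: exp_add l4_def)
    show ?thesis unfolding X exp_minus Y by (simp add: exp_minus field_simps)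
  qed
  have e2: "exp (- b2\<^sup>2 / (2 * (real (card S) * real n))) = exp (- t) / 4"
  proof -
    have X: "- b2\<^sup>2 / (2 * (real (card S) * real n)) = - (l4 + t)" unfolding b2sq using npos ppos p_def by simp
    have Y: "exp (l4 + t) = 4 * exp t" by (simp add: exp_add l4_def)
    show ?thesis unfolding X exp_minus Y by (simp add: exp_minus field_simps)
  qed
  have m1: "m \<ge> 1" using m2 by simp
  obtain A where A: "A \<in> sets (data_measure m n tst)"
    and Ameas: "measure (data_measure m n tst) A \<ge> 1 - (2 * real m * exp (- b1\<^sup>2 / (2 * real n))
        + 2 * exp (- b2\<^sup>2 / (2 * (real (card S) * real n))))"
    and Agood: "\<forall>x\<in>A. (\<forall>j\<in>{1..m}. \<bar>\<Sum>i=1..n. x (j,i) - tst j\<bar> < b1) \<and>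
              \<bar>\<Sum>j\<in>S. \<Sum>i=1..n. x (j,i) - tst j\<bar> < b2"
    using good_event[OF m1 n1 S Sne b1pos b2pos, of tst] by blast
  have "2 * real m * exp (- b1\<^sup>2 / (2 * real n)) + 2 * exp (- b2\<^sup>2 / (2 * (real (card S) * real n))) = exp (- t)"
    unfolding e1 e2 using mpos by (simp add: field_simps)
  then have Ameas': "measure (data_measure m n tst) A \<ge> 1 - exp (- t)" using Ameas by simp
  define s where "s = b1 / real n"
  define u where "u = b2 / (real n * p)"
  have s0: "s \<ge> 0" unfolding s_def using b1pos npos by simp
  have u0: "u \<ge> 0" unfolding u_def using b2pos npos ppos by simp
  have s_le: "s \<le> (9/4) * r"
  proof (rule power2_le_imp_le)
    have "s\<^sup>2 = b1\<^sup>2 / (real n)\<^sup>2" unfolding s_def by (simp add: power_divide)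
    also have "\<dots> = 2 * (L + l4) / real n" unfolding b1sq using npos by (simp add: power2_eq_square field_simps)
    also have "\<dots> \<le> 5 * L / real n"
    proof -
      have "2 * L + 2 * l4 \<le> 5 * L" using ln4 ln2 Lge by linarith
      then have "2 * (L + l4) \<le> 5 * L" by (simp add: algebra_simps)
      then show ?thesis using npos by (simp add: divide_right_mono)
    qed
    also have "\<dots> \<le> ((9/4) * r)\<^sup>2" unfolding power_mult_distrib r2 using npos Lpos by (simp add: power2_eq_square divide_simps)
    finally show "s\<^sup>2 \<le> ((9/4) * r)\<^sup>2" .
  qed (use rpos in simp)
  have u_le: "u \<le> (7/2) * w"
  proof (rule power2_le_imp_le)
    have "u\<^sup>2 = b2\<^sup>2 / (real n * p)\<^sup>2" unfolding u_def by (simp add: power_divide)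
    also have "\<dots> = 2 * (t + l4) / (real n * p)" unfolding b2sq using npos ppos p_def
      by (simp add: power2_eq_square field_simps)
    also have "\<dots> \<le> 12 * t / (real m * real n)"
    proof -
      have "2 * (t + l4) * (real m * real n) \<le> 12 * t * (real n * p)"
      proof -
        have "2 * t + 2 * l4 \<le> 6 * t" using ln4 ln2 t1 by linarith
        then have f1: "2 * (t + l4) \<le> 6 * t" by (simp add: algebra_simps)
        have f2: "real m \<le> 2 * p" using p_ge by simp
        have f3: "0 \<le> 6 * t" using t1 by simp
        have f4: "0 \<le> real m" by simp
        have "2 * (t + l4) * real m \<le> 6 * t * (2 * p)" by (rule mult_mono[OF f1 f2 f3 f4])
        then have "2 * (t + l4) * real m * real n \<le> 6 * t * (2 * p) * real n"
          using npos by (intro mult_right_mono) auto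
        then show ?thesis by (simp add: algebra_simps)
      qed
      then show ?thesis using npos ppos mpos by (simp add: divide_simps)
    qed
    also have "\<dots> \<le> ((7/2) * w)\<^sup>2" unfolding power_mult_distrib w2 using npos mpos t1 by (simp add: power2_eq_square divide_simps)
    finally show "u\<^sup>2 \<le> ((7/2) * w)\<^sup>2" .
  qed (use wpos in simp)
  show "\<exists>A \<in> sets (data_measure m n tst).
       measure (data_measure m n tst) A \<ge> 1 - exp (- t) \<and>
       (\<forall>x\<in>A. \<forall>ths th. is_minimizer m n lam x ths th \<longrightarrow>
          (\<forall>j\<in>S. \<bar>ths j - tst j\<bar> <
             100 / (1 - 2*c)\<^sup>2 * (sqrt (t / (real m * real n))
               + min \<delta> (sqrt ((ln (real m) + t) / real n))
               + \<epsilon> * sqrt ((ln (real m) + t) / real n))) \<and>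
          (\<forall>j\<in>{1..m} - S. \<bar>ths j - tst j\<bar> <
             100 / (1 - 2*c)\<^sup>2 * sqrt ((ln (real m) + t) / real n)))"
  proof (rule bexI[OF _ A], rule conjI[OF Ameas'], intro ballI allI impI)
    fix x ths th assume xA: "x \<in> A" and mn: "is_minimizer m n lam x ths th"
    define y where "y = ybar n x"
    have row: "(\<Sum>i=1..n. x (j,i) - tst j) = real n * (y j - tst j)" for j
      unfolding y_def ybar_def using npos by (simp add: sum_subtractf algebra_simps)
    have H3: "\<forall>j\<in>{1..m}. \<bar>y j - tst j\<bar> \<le> s"
    proof
      fix j assume j: "j \<in> {1..m}"
      have "\<bar>\<Sum>i=1..n. x (j,i) - tst j\<bar> < b1" using Agood xA j by blast
      moreover note row[of j]
      ultimately have "real n * \<bar>y j - tst j\<bar> < b1" by (simp add: abs_mult)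
      then show "\<bar>y j - tst j\<bar> \<le> s" unfolding s_def using npos by (simp add: field_simps)
    qed
    have H4: "\<bar>\<Sum>j\<in>S. y j - tst j\<bar> \<le> p * u"
    proof -
      have "\<bar>\<Sum>j\<in>S. \<Sum>i=1..n. x (j,i) - tst j\<bar> < b2" using Agood xA by blast
      moreover have "(\<Sum>j\<in>S. \<Sum>i=1..n. x (j,i) - tst j) = real n * (\<Sum>j\<in>S. y j - tst j)"
      proof -
        have "(\<Sum>j\<in>S. \<Sum>i=1..n. x (j,i) - tst j) = (\<Sum>j\<in>S. real n * (y j - tst j))"
          by (rule sum.cong[OF refl row])
        then show ?thesis by (simp add: sum_distrib_left)
      qed
      ultimately have "real n * \<bar>\<Sum>j\<in>S. y j - tst j\<bar> < b2" by (simp add: abs_mult)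
      then show ?thesis unfolding u_def using npos ppos by (simp add: field_simps)
    qed
    have H1: "\<forall>j\<in>{1..m}. ths j = y j - clip lam (y j - th)"
      using minimizer_prox[OF mn n1] lam0 unfolding y_def by auto
    have H2: "\<bar>\<Sum>j\<in>S. ths j - y j\<bar> \<le> lam * q"
      using minimizer_shift[OF mn n1 _ S] lam0 unfolding y_def q_def by auto
    have crude: "\<bar>ths j - tst j\<bar> \<le> lam + s" if j: "j \<in> {1..m}" for j
    proof -
      have "\<bar>clip lam (y j - th)\<bar> \<le> lam" unfolding clip_def using lam0 by auto
      then have "\<bar>ths j - y j\<bar> \<le> lam" using H1 j by simp
      then show ?thesis using H3 j by fastforce
    qed
    have crude2: "lam + s \<le> (39/4) * (KK * r)"
    proof -
      have "K1 * v \<le> K1 * ((3/2) * r)" using v_hi K1pos by (intro mult_left_mono) auto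
      moreover have "K1 * r \<le> KK * r" using KKge rpos by (intro mult_right_mono) auto
      moreover have "r \<le> KK * r" using KKge K1ge rpos by simp
      ultimately show ?thesis using lamv s_le by simp
    qed
    have Sc: "\<forall>j\<in>{1..m} - S. \<bar>ths j - tst j\<bar> < 100 / (1 - 2*c)\<^sup>2 * sqrt ((ln (real m) + t) / real n)"
    proof
      fix j assume j: "j \<in> {1..m} - S"
      have "0 < KK * r" using KKpos rpos by simp
      then show "\<bar>ths j - tst j\<bar> < 100 / (1 - 2*c)\<^sup>2 * sqrt ((ln (real m) + t) / real n)"
        unfolding Cform using crude[of j] crude2 j unfolding r_def L_def by simp
    qed
    have Sin: "\<forall>j\<in>S. \<bar>ths j - tst j\<bar> < 100 / (1 - 2*c)\<^sup>2 * (sqrt (t / (real m * real n))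
               + min \<delta> (sqrt ((ln (real m) + t) / real n))
               + \<epsilon> * sqrt ((ln (real m) + t) / real n))"
    proof
      fix j assume j: "j \<in> S"
      have jm: "j \<in> {1..m}" using j S by auto
      have target: "100 / (1 - 2*c)\<^sup>2 * (sqrt (t / (real m * real n))
               + min \<delta> (sqrt ((ln (real m) + t) / real n))
               + \<epsilon> * sqrt ((ln (real m) + t) / real n))
          = 100 * (KK * w) + 100 * (KK * min \<delta> r) + 100 * (KK * (\<epsilon> * r))"
        unfolding Cform w_def r_def L_def by (simp add: algebra_simps)
      have a1: "KK * w > 0" using KKpos wpos by simp
      have a2: "KK * min \<delta> r \<ge> 0" using KKpos d0 rpos by simp
      have a3: "KK * (\<epsilon> * r) \<ge> 0" using KKpos e0 rpos by simp
      show "\<bar>ths j - tst j\<bar> < 100 / (1 - 2*c)\<^sup>2 * (sqrt (t / (real m * real n))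
               + min \<delta> (sqrt ((ln (real m) + t) / real n))
               + \<epsilon> * sqrt ((ln (real m) + t) / real n))"
      proof (cases "\<delta> \<le> r")
        case False
        then have "min \<delta> r = r" by simp
        then show ?thesis unfolding target using crude[OF jm] crude2 a1 a3 by simp
      next
        case True
        have mind: "min \<delta> r = \<delta>" using True by simp
        have H6: "2 * \<delta> + 2 * s + lam * q / p \<le> lam"
        proof -
          have "lam * (1 - 2 * c) \<le> lam * (1 - \<rho>)" using rho_le ec lam0 by (intro mult_left_mono) auto
          then have "5 * v \<le> lam - lam * \<rho>" using lamc by (simp add: algebra_simps)
          moreover have "lam * q / p = lam * \<rho>" unfolding \<rho>_def by simp
          ultimately show ?thesis using True s_le v_lo rpos by linarith
        qed
        have B: "\<forall>j\<in>S. \<bar>ths j - tst j\<bar> \<le> lam * q / p + u + 2 * \<delta>"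
          by (rule det_bound[OF finS pq q0 p_def lam0 _ H2 _ H4 th0 H6]) (use H1 H3 S in auto)
        have "lam * q / p = lam * \<rho>" unfolding \<rho>_def by simp
        also have "\<dots> \<le> lam * (2 * \<epsilon>)" using rho_le lam0 by (intro mult_left_mono) auto
        also have "\<dots> = 10 * (\<epsilon> * (K1 * v))" using lamv by simp
        also have "\<dots> \<le> 10 * (\<epsilon> * (K1 * ((3/2) * r)))"
          using v_hi K1pos e0 by (intro mult_left_mono) auto
        also have "\<dots> = 15 * (K1 * (\<epsilon> * r))" by simp
        also have "\<dots> \<le> 15 * (KK * (\<epsilon> * r))"
          using KKge e0 rpos by (intro mult_left_mono mult_right_mono) auto
        finally have lq: "lam * q / p \<le> 15 * (KK * (\<epsilon> * r))" .
        have KK1: "1 \<le> KK" using KKge K1ge by linarith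
        have "1 * w \<le> KK * w" using KK1 wpos by (intro mult_right_mono) auto
        then have uw: "u \<le> (7/2) * (KK * w)" using u_le by simp
        have "1 * \<delta> \<le> KK * \<delta>" using KK1 d0 by (intro mult_right_mono) auto
        then have dd: "\<delta> \<le> KK * \<delta>" by simp
        have Bj: "\<bar>ths j - tst j\<bar> \<le> lam * q / p + u + 2 * \<delta>" using B j by blast
        show ?thesis unfolding target mind using Bj lq uw dd a1 a3 d0 by linarith
      qed
    qed
    show "(\<forall>j\<in>S. \<bar>ths j - tst j\<bar> < 100 / (1 - 2*c)\<^sup>2 * (sqrt (t / (real m * real n))
               + min \<delta> (sqrt ((ln (real m) + t) / real n))
               + \<epsilon> * sqrt ((ln (real m) + t) / real n))) \<and> (\<forall>j\<in>{1..m} - S. \<bar>ths j - tst j\<bar> < 100 / (1 - 2*c)\<^sup>2 * sqrt ((ln (real m) + t) / real n))"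
      using Sin Sc by blast
  qed
qed simp

end
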